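(* Let $A$ (in $\mathcal H$) and $B$ (in $\mathcal K$) be closed densely defined operators with $A\dashv B$ via a bounded intertwining operator $T$. Assume that $D(B)\subseteq D(T^{-1})$ and $R(B)\subseteq D(T^{-1})$, where $D(T^{-1})=R(T)$. Then $\rho(A)\setminus\sigma_p(B)\subseteq\rho(B)\cup\sigma_c(B)$.
   Context: A bounded operator $T:\mathcal H\to\mathcal K$ is a bounded intertwining operator for $A$ and $B$ if $T D(A)\subseteq D(B)$ and $BT\xi=TA\xi$ for all $\xi\in D(A)$. $A\dashv B$ (quasi-similarity) means there is a bounded intertwining operator $T$ for $A$ and $B$ that is injective with densely defined inverse $T^{-1}$. Spectral notions: $\rho(A)$ = set of $\lambda$ with $A-\lambda I$ injective and $(A-\lambda I)^{-1}$ bounded everywhere defined; $\sigma_p$ = set of eigenvalues; $\sigma_c(B)$ = set of $\lambda$ with $B-\lambda I$ injective with dense range different from $\mathcal K$. *)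

theory Defs
  imports "HOL-Analysis.Analysis"
begin

class complex_hilbert = real_normed_vector + complete_space +
  fixes scaleC :: "complex \<Rightarrow> 'a \<Rightarrow> 'a"
    and cinner :: "'a \<Rightarrow> 'a \<Rightarrow> complex"
  assumes scaleC_add_left: "scaleC (a + b) x = scaleC a x + scaleC b x"
    and scaleC_add_right: "scaleC a (x + y) = scaleC a x + scaleC a y"
    and scaleC_scaleC: "scaleC a (scaleC b x) = scaleC (a * b) x"
    and scaleC_one: "scaleC 1 x = x"
    and scaleR_scaleC: "scaleR r x = scaleC (complex_of_real r) x"
    and cinner_commute: "cinner x y = cnj (cinner y x)"
    and cinner_add_left: "cinner (x + y) z = cinner x z + cinner y z"
    and cinner_scaleC_left: "cinner (scaleC c x) y = cnj c * cinner x y"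
    and cinner_nonneg: "Im (cinner x x) = 0 \<and> Re (cinner x x) \<ge> 0"
    and cinner_eq_zero: "cinner x x = 0 \<longleftrightarrow> x = 0"
    and norm_cinner: "norm x = sqrt (Re (cinner x x))"

text \<open>An (unbounded) linear operator is given by its domain D and its action f on D.\<close>

definition csubspace :: "'a::complex_hilbert set \<Rightarrow> bool" where
  "csubspace D \<longleftrightarrow> 0 \<in> D \<and> (\<forall>x\<in>D. \<forall>y\<in>D. x + y \<in> D) \<and> (\<forall>c. \<forall>x\<in>D. scaleC c x \<in> D)"

definition lin_op :: "'a::complex_hilbert set \<Rightarrow> ('a \<Rightarrow> 'b::complex_hilbert) \<Rightarrow> bool" where
  "lin_op D f \<longleftrightarrow> csubspace D \<and> (\<forall>x\<in>D. \<forall>y\<in>D. f (x + y) = f x + f y)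
      \<and> (\<forall>c. \<forall>x\<in>D. f (scaleC c x) = scaleC c (f x))"

definition graph :: "'a set \<Rightarrow> ('a \<Rightarrow> 'b) \<Rightarrow> ('a \<times> 'b) set" where
  "graph D f = {(x, f x) | x. x \<in> D}"

definition closed_op :: "'a::complex_hilbert set \<Rightarrow> ('a \<Rightarrow> 'b::complex_hilbert) \<Rightarrow> bool" where
  "closed_op D f \<longleftrightarrow> lin_op D f \<and> closed (graph D f)"

definition densely_defined :: "'a::complex_hilbert set \<Rightarrow> bool" where
  "densely_defined D \<longleftrightarrow> closure D = UNIV"

definition cbounded_linear :: "('a::complex_hilbert \<Rightarrow> 'b::complex_hilbert) \<Rightarrow> bool" where
  "cbounded_linear T \<longleftrightarrow> bounded_linear T \<and> (\<forall>c x. T (scaleC c x) = scaleC c (T x))"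

definition intertwining :: "('a::complex_hilbert \<Rightarrow> 'b::complex_hilbert) \<Rightarrow> 'a set \<Rightarrow> ('a \<Rightarrow> 'a)
    \<Rightarrow> 'b set \<Rightarrow> ('b \<Rightarrow> 'b) \<Rightarrow> bool" where
  "intertwining T DA fA DB fB \<longleftrightarrow> cbounded_linear T \<and> T ` DA \<subseteq> DB
      \<and> (\<forall>\<xi>\<in>DA. fB (T \<xi>) = T (fA \<xi>))"

text \<open>A \<dashv> B via T: T bounded intertwining, injective, with densely defined inverse
  (the domain of T^{-1} is R(T)).\<close>
definition quasi_sim_via :: "('a::complex_hilbert \<Rightarrow> 'b::complex_hilbert) \<Rightarrow> 'a set \<Rightarrow> ('a \<Rightarrow> 'a)
    \<Rightarrow> 'b set \<Rightarrow> ('b \<Rightarrow> 'b) \<Rightarrow> bool" where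
  "quasi_sim_via T DA fA DB fB \<longleftrightarrow> intertwining T DA fA DB fB \<and> inj T \<and> closure (range T) = UNIV"

definition resolvent_set :: "'a::complex_hilbert set \<Rightarrow> ('a \<Rightarrow> 'a) \<Rightarrow> complex set" where
  "resolvent_set D f = {l. inj_on (\<lambda>x. f x - scaleC l x) D
      \<and> (\<lambda>x. f x - scaleC l x) ` D = UNIV
      \<and> cbounded_linear (the_inv_into D (\<lambda>x. f x - scaleC l x))}"

definition point_spectrum :: "'a::complex_hilbert set \<Rightarrow> ('a \<Rightarrow> 'a) \<Rightarrow> complex set" where
  "point_spectrum D f = {l. \<exists>x\<in>D. x \<noteq> 0 \<and> f x = scaleC l x}"

definition continuous_spectrum :: "'a::complex_hilbert set \<Rightarrow> ('a \<Rightarrow> 'a) \<Rightarrow> complex set" where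
  "continuous_spectrum D f = {l. inj_on (\<lambda>x. f x - scaleC l x) D
      \<and> closure ((\<lambda>x. f x - scaleC l x) ` D) = UNIV
      \<and> (\<lambda>x. f x - scaleC l x) ` D \<noteq> UNIV}"

end

theory Submission imports Defs begin
instance complex_hilbert \<subseteq> banach ..
lemma baire_step:
  fixes T :: "'a::banach \<Rightarrow> 'b::banach"
  assumes "surj T"
  shows "\<exists>n::nat. interior (closure (T ` cball 0 (real n))) \<noteq> {}"
proof (rule ccontr)
  assume H: "\<not> ?thesis"
  let ?G = "range (\<lambda>n::nat. closure (T ` cball 0 (real n)))"
  have "euclidean interior_of \<Union>?G = {}"
  proof (rule Baire_category_alt)
    show "completely_metrizable_space (euclidean::'b topology) \<or> locally_compact_space (euclidean::'b topology) \<and> regular_space (euclidean::'b topology)"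
      using completely_metrizable_space_euclidean by blast
    show "countable ?G" by simp
    fix S assume "S \<in> ?G"
    then obtain n where n: "S = closure (T ` cball 0 (real n))" by blast
    have "interior S = {}" using H n by blast
    thus "closedin euclidean S \<and> euclidean interior_of S = {}" using n by simp
  qed
  moreover have "\<Union>?G = UNIV"
  proof (rule set_eqI, rule iffI)
    fix y :: 'b
    have "y \<in> range T" using assms by simp
    then obtain x where yx: "y = T x" by (rule rangeE)
    obtain n::nat where nx: "norm x \<le> real n" using real_arch_simple by blast
    have "x \<in> cball 0 (real n)" using nx by simp
    hence "y \<in> T ` cball 0 (real n)" using yx by (rule rev_image_eqI)
    hence "y \<in> closure (T ` cball 0 (real n))" using closure_subset by (rule subsetD[rotated])
    thus "y \<in> \<Union>?G" by (rule UN_I[rotated]) simp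
  qed simp
  ultimately show False by simp
qed

lemma approx_step:
  fixes T :: "'a::banach \<Rightarrow> 'b::banach"
  assumes lin: "bounded_linear T" and "surj T"
  shows "\<exists>M>0. \<forall>y e. e > 0 \<longrightarrow> (\<exists>x. norm x \<le> M * norm y \<and> norm (y - T x) < e)"
proof -
  interpret T: bounded_linear T by (rule lin)
  obtain n::nat where "interior (closure (T ` cball 0 (real n))) \<noteq> {}"
    using baire_step[OF assms(2)] by blast
  then obtain y0 where "y0 \<in> interior (closure (T ` cball 0 (real n)))" by blast
  then obtain r where r: "r > 0" "ball y0 r \<subseteq> closure (T ` cball 0 (real n))"
    using mem_interior by blast
  have small: "\<exists>x. norm x \<le> 2 * real n \<and> norm (z - T x) < e" if z: "norm z < r" and e: "e > 0" for z e
  proof -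
    have "y0 + z \<in> closure (T ` cball 0 (real n))" using r z by (auto simp: dist_norm)
    then obtain w1 where "w1 \<in> T ` cball 0 (real n)" "dist w1 (y0 + z) < e/2"
      using e closure_approachable[of "y0 + z"] half_gt_zero by blast
    then obtain x1 where x1: "x1 \<in> cball 0 (real n)" "dist (T x1) (y0 + z) < e/2" by blast
    have "y0 \<in> closure (T ` cball 0 (real n))" using r by auto
    then obtain w2 where "w2 \<in> T ` cball 0 (real n)" "dist w2 y0 < e/2"
      using e closure_approachable[of y0] half_gt_zero by blast
    then obtain x2 where x2: "x2 \<in> cball 0 (real n)" "dist (T x2) y0 < e/2" by blast
    have "norm (x1 - x2) \<le> norm x1 + norm x2" by (rule norm_triangle_ineq4)
    also have "\<dots> \<le> 2 * real n" using x1 x2 by auto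
    finally have a: "norm (x1 - x2) \<le> 2 * real n" .
    have eq: "z - T (x1 - x2) = (y0 + z - T x1) + (T x2 - y0)" by (simp add: T.diff algebra_simps)
    have "norm (z - T (x1 - x2)) \<le> norm (y0 + z - T x1) + norm (T x2 - y0)"
      unfolding eq by (rule norm_triangle_ineq)
    also have "\<dots> < e" using x1(2) x2(2) by (simp add: dist_norm norm_minus_commute)
    finally show ?thesis using a by blast
  qed
  define M where "M = 4 * real n / r + 1"
  have M: "M > 0" using r unfolding M_def by (intro add_nonneg_pos divide_nonneg_pos) auto
  have "\<exists>x. norm x \<le> M * norm y \<and> norm (y - T x) < e" if e: "e > 0" for y e
  proof (cases "y = 0")
    case True then show ?thesis using e by (intro exI[of _ 0]) auto
  next
    case False
    hence ny: "norm y > 0" by simp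
    define c where "c = (r/2) / norm y"
    have c: "c > 0" using ny r by (simp add: c_def)
    have "norm (c *\<^sub>R y) < r" using ny r by (simp add: c_def)
    then obtain x where x: "norm x \<le> 2 * real n" "norm (c *\<^sub>R y - T x) < c * e"
      using small[of "c *\<^sub>R y" "c * e"] c e by auto
    have "norm ((1/c) *\<^sub>R x) = norm x / c" using c by simp
    also have "\<dots> \<le> 2 * real n / c" using x(1) c by (simp add: divide_right_mono)
    also have "\<dots> = 4 * real n / r * norm y" using ny r by (simp add: c_def field_simps)
    also have "\<dots> \<le> M * norm y" using ny by (simp add: M_def distrib_right)
    finally have 1: "norm ((1/c) *\<^sub>R x) \<le> M * norm y" .
    have "y - T ((1/c) *\<^sub>R x) = (1/c) *\<^sub>R (c *\<^sub>R y - T x)" using c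
      by (simp add: T.scaleR algebra_simps)
    hence "norm (y - T ((1/c) *\<^sub>R x)) = norm (c *\<^sub>R y - T x) / c" using c by simp
    also have "\<dots> < e" using x(2) c by (simp add: divide_less_eq mult.commute)
    finally show ?thesis using 1 by blast
  qed
  thus ?thesis using M by blast
qed


lemma bounded_inverse:
  fixes T :: "'a::banach \<Rightarrow> 'b::banach"
  assumes lin: "bounded_linear T" and bij: "bij T"
  shows "bounded_linear (inv T)"
proof -
  interpret T: bounded_linear T by (rule lin)
  have surj: "surj T" and inj: "inj T" using bij bij_is_surj bij_is_inj by auto
  have TS: "T (inv T y) = y" for y using surj by (simp add: surj_f_inv_f)
  have ST: "inv T (T x) = x" for x using inj by simp
  obtain M where M: "M > 0" "\<And>y e. e > 0 \<Longrightarrow> \<exists>x. norm x \<le> M * norm y \<and> norm (y - T x) < e"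
    using approx_step[OF lin surj] by blast
  have "\<forall>y. \<exists>x. norm x \<le> M * norm y \<and> norm (y - T x) \<le> norm y / 2"
  proof
    fix y show "\<exists>x. norm x \<le> M * norm y \<and> norm (y - T x) \<le> norm y / 2"
    proof (cases "y = 0")
      case True then show ?thesis by (intro exI[of _ 0]) auto
    next
      case False
      then obtain x where "norm x \<le> M * norm y \<and> norm (y - T x) < norm y / 2"
        using M(2)[of "norm y / 2" y] by auto
      thus ?thesis by (meson less_imp_le)
    qed
  qed
  then obtain g where g: "\<And>y. norm (g y) \<le> M * norm y" "\<And>y. norm (y - T (g y)) \<le> norm y / 2"
    by metis
  have bound: "norm (inv T y) \<le> norm y * (2 * M)" for y
  proof -
    define ys where "ys k = ((\<lambda>y. y - T (g y)) ^^ k) y" for k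
    define xs where "xs k = g (ys k)" for k
    have ys_Suc: "ys (Suc k) = ys k - T (xs k)" for k by (simp add: ys_def xs_def)
    have ys_b: "norm (ys k) \<le> norm y * (1/2)^k" for k
    proof (induction k)
      case 0 then show ?case by (simp add: ys_def)
    next
      case (Suc k)
      have "norm (ys (Suc k)) \<le> norm (ys k) / 2" using g(2) by (simp add: ys_Suc xs_def)
      also have "\<dots> \<le> norm y * (1/2)^k / 2" using Suc by simp
      finally show ?case by simp
    qed
    have xs_b: "norm (xs k) \<le> M * norm y * (1/2)^k" for k
    proof -
      have "norm (xs k) \<le> M * norm (ys k)" by (simp add: xs_def g(1))
      also have "\<dots> \<le> M * (norm y * (1/2)^k)" using M(1) ys_b by (simp add: mult_left_mono)
      finally show ?thesis by simp
    qed
    have geo: "summable (\<lambda>k. M * norm y * (1/2::real)^k)"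
      by (intro summable_mult summable_geometric) simp
    have sn: "summable (\<lambda>k. norm (xs k))"
      by (rule summable_comparison_test[OF _ geo]) (use xs_b in simp)
    have s: "summable xs" by (rule summable_norm_cancel[OF sn])
    have psum: "(\<Sum>k<n. T (xs k)) = y - ys n" for n
      by (induction n) (simp_all add: ys_def[of 0] ys_Suc)
    have ys0: "ys \<longlonglongrightarrow> 0"
    proof (rule tendsto_norm_zero_cancel, rule Lim_null_comparison[where g = "\<lambda>k. norm y * (1/2)^k"])
      show "\<forall>\<^sub>F k in sequentially. norm (norm (ys k)) \<le> norm y * (1/2)^k" using ys_b by simp
      show "(\<lambda>k. norm y * (1/2::real)^k) \<longlonglongrightarrow> 0"
        by (intro tendsto_mult_right_zero LIMSEQ_power_zero) simp
    qed
    have "(\<lambda>n. T (\<Sum>k<n. xs k)) \<longlonglongrightarrow> T (suminf xs)"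
      by (intro T.tendsto summable_LIMSEQ s)
    moreover have "(\<lambda>n. T (\<Sum>k<n. xs k)) \<longlonglongrightarrow> y"
    proof -
      have "(\<lambda>n. y - ys n) \<longlonglongrightarrow> y - 0" by (intro tendsto_intros ys0)
      thus ?thesis by (simp add: T.sum psum)
    qed
    ultimately have "T (suminf xs) = y" by (rule LIMSEQ_unique)
    hence "inv T y = suminf xs" using ST by metis
    hence "norm (inv T y) \<le> (\<Sum>k. norm (xs k))" using summable_norm[OF sn] by simp
    also have "\<dots> \<le> (\<Sum>k. M * norm y * (1/2::real)^k)"
      by (rule suminf_le[OF _ sn geo]) (use xs_b in simp)
    also have "\<dots> = M * norm y * 2"
      by (simp add: suminf_mult suminf_geometric summable_geometric)
    finally show ?thesis by (simp add: algebra_simps)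
  qed
  show ?thesis
  proof (rule bounded_linear_intro[OF _ _ bound])
    fix x y show "inv T (x + y) = inv T x + inv T y"
      by (metis ST T.add TS)
  next
    fix r x show "inv T (r *\<^sub>R x) = r *\<^sub>R inv T x"
      by (metis ST T.scaleR TS)
  qed
qed


lemma scaleC_zero_right: "scaleC a (0::'a::complex_hilbert) = 0"
proof -
  have "scaleC a (0::'a) = scaleC a 0 + scaleC a 0" by (metis add_0 scaleC_add_right)
  thus ?thesis by simp
qed

lemma scaleC_minus_right: "scaleC a (- x::'a::complex_hilbert) = - scaleC a x"
proof -
  have "scaleC a x + scaleC a (-x) = 0" by (metis scaleC_add_right scaleC_zero_right add.right_inverse)
  thus ?thesis by (simp add: eq_neg_iff_add_eq_0 add.commute)
qed

lemma scaleC_diff_right: "scaleC a (x - y::'a::complex_hilbert) = scaleC a x - scaleC a y"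
  by (metis diff_conv_add_uminus scaleC_add_right scaleC_minus_right)

lemma minus_scaleC: "- (x::'a::complex_hilbert) = scaleC (-1) x"
  by (metis scaleR_scaleC scaleR_minus1_left of_real_1 of_real_minus)

lemma csubspace_diff: "csubspace D \<Longrightarrow> x \<in> D \<Longrightarrow> y \<in> D \<Longrightarrow> x - y \<in> D"
  unfolding csubspace_def by (metis diff_conv_add_uminus minus_scaleC)

lemma lin_op_diff: "lin_op D f \<Longrightarrow> x \<in> D \<Longrightarrow> y \<in> D \<Longrightarrow> f (x - y) = f x - f y"
  unfolding lin_op_def csubspace_def
  by (metis diff_conv_add_uminus minus_scaleC)

theorem corollary3p13:
  fixes DA :: "'a::complex_hilbert set" and A :: "'a \<Rightarrow> 'a"
    and DB :: "'b::complex_hilbert set" and B :: "'b \<Rightarrow> 'b"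
    and T :: "'a \<Rightarrow> 'b"
  assumes "closed_op DA A" and "densely_defined DA"
    and "closed_op DB B" and "densely_defined DB"
    and "quasi_sim_via T DA A DB B"
    and "DB \<subseteq> range T"
    and "B ` DB \<subseteq> range T"
  shows "resolvent_set DA A - point_spectrum DB B
           \<subseteq> resolvent_set DB B \<union> continuous_spectrum DB B"
proof
  fix l assume l: "l \<in> resolvent_set DA A - point_spectrum DB B"
  define Al where "Al = (\<lambda>x. A x - scaleC l x)"
  define Bl where "Bl = (\<lambda>x. B x - scaleC l x)"
  have injA: "inj_on Al DA" and surjA: "Al ` DA = UNIV"
    and RA: "cbounded_linear (the_inv_into DA Al)"
    using l unfolding resolvent_set_def Al_def by auto
  have npB: "\<And>x. x \<in> DB \<Longrightarrow> B x = scaleC l x \<Longrightarrow> x = 0"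
    using l unfolding point_spectrum_def by auto
  have linB: "lin_op DB B" using assms(3) by (simp add: closed_op_def)
  have subB: "csubspace DB" using linB by (simp add: lin_op_def)
  have Tcb: "cbounded_linear T" and TDA: "T ` DA \<subseteq> DB"
    and Tint: "\<And>\<xi>. \<xi> \<in> DA \<Longrightarrow> B (T \<xi>) = T (A \<xi>)" and injT: "inj T"
    and denseT: "closure (range T) = UNIV"
    using assms(5) unfolding quasi_sim_via_def intertwining_def by auto
  have Tbl: "bounded_linear T" and TC: "\<And>c x. T (scaleC c x) = scaleC c (T x)"
    using Tcb unfolding cbounded_linear_def by auto
  interpret T: bounded_linear T by (rule Tbl)
  have injB: "inj_on Bl DB"
  proof (rule inj_onI)
    fix x y assume xy: "x \<in> DB" "y \<in> DB" "Bl x = Bl y"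
    have "B (x - y) = B x - B y" by (rule lin_op_diff[OF linB xy(1,2)])
    also have "\<dots> = scaleC l x - scaleC l y" using xy(3) unfolding Bl_def
      by (simp add: algebra_simps)
    also have "\<dots> = scaleC l (x - y)" by (simp add: scaleC_diff_right)
    finally have "x - y = 0" using npB csubspace_diff[OF subB xy(1,2)] by blast
    thus "x = y" by simp
  qed
  have inter: "Bl (T \<xi>) = T (Al \<xi>)" if "\<xi> \<in> DA" for \<xi>
    using that by (simp add: Bl_def Al_def Tint T.diff TC)
  have rT: "range T \<subseteq> Bl ` DB"
  proof
    fix y assume "y \<in> range T"
    then obtain z where z: "y = T z" by blast
    have "z \<in> Al ` DA" using surjA by simp
    then obtain \<xi> where \<xi>: "\<xi> \<in> DA" "z = Al \<xi>" by (rule imageE) simp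
    have "y = Bl (T \<xi>)" using z \<xi> inter by simp
    moreover have "T \<xi> \<in> DB" using TDA \<xi> by blast
    ultimately show "y \<in> Bl ` DB" by blast
  qed
  have dense: "closure (Bl ` DB) = UNIV"
    using closure_mono[OF rT] denseT by auto
  show "l \<in> resolvent_set DB B \<union> continuous_spectrum DB B"
  proof (cases "Bl ` DB = UNIV")
    case False
    have "l \<in> continuous_spectrum DB B"
      unfolding continuous_spectrum_def mem_Collect_eq
      using injB dense False by (simp only: Bl_def) simp
    then show ?thesis by (rule UnI2)
  next
    case True
    have "Bl x \<in> range T" if "x \<in> DB" for x
    proof -
      have "B x \<in> range T" using assms(7) that by (rule subsetD[OF _ imageI])
      then obtain a where a: "B x = T a" by (rule rangeE)
      have "x \<in> range T" using assms(6) that by (rule subsetD)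
      then obtain b where b: "x = T b" by (rule rangeE)
      have "T (a - scaleC l b) = T a - scaleC l (T b)" by (simp add: T.diff TC)
      hence "T (a - scaleC l b) = B x - scaleC l x" by (simp only: a[symmetric] b[symmetric])
      hence "Bl x = T (a - scaleC l b)" by (simp add: Bl_def)
      thus ?thesis by blast
    qed
    hence surjT: "surj T"
    proof -
      assume h: "\<And>x. x \<in> DB \<Longrightarrow> Bl x \<in> range T"
      have "UNIV \<subseteq> range T"
      proof
        fix y :: 'b
        have "y \<in> Bl ` DB" using True by simp
        then obtain x where "x \<in> DB" "y = Bl x" by (rule imageE) simp
        thus "y \<in> range T" using h by simp
      qed
      thus ?thesis by auto
    qed
    have bijT: "bij T" using injT surjT by (simp add: bij_def)
    have TS: "T (inv T y) = y" for y using surjT by (simp add: surj_f_inv_f)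
    have ST: "inv T (T x) = x" for x using injT by simp
    have Tinv: "cbounded_linear (inv T)"
      unfolding cbounded_linear_def
    proof
      show "bounded_linear (inv T)" by (rule bounded_inverse[OF Tbl bijT])
      show "\<forall>c x. inv T (scaleC c x) = scaleC c (inv T x)"
      proof (intro allI)
        fix c x
        have "T (scaleC c (inv T x)) = scaleC c x" by (simp add: TC TS)
        hence "inv T (scaleC c x) = inv T (T (scaleC c (inv T x)))" by simp
        thus "inv T (scaleC c x) = scaleC c (inv T x)" by (simp only: ST)
      qed
    qed
    define R where "R = the_inv_into DA Al"
    have eq: "the_inv_into DB Bl = (\<lambda>y. T (R (inv T y)))"
    proof
      fix y
      have Ry: "R (inv T y) \<in> DA" unfolding R_def
        by (rule the_inv_into_into[OF injA]) (simp_all add: surjA)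
      have "Al (R (inv T y)) = inv T y" unfolding R_def
        by (rule f_the_inv_into_f[OF injA]) (simp add: surjA)
      hence "Bl (T (R (inv T y))) = y" using inter[OF Ry] TS by simp
      moreover have "T (R (inv T y)) \<in> DB" using TDA Ry by blast
      ultimately show "the_inv_into DB Bl y = T (R (inv T y))"
        using the_inv_into_f_f[OF injB, of "T (R (inv T y))"] by simp
    qed
    have "cbounded_linear (\<lambda>y. T (R (inv T y)))"
    proof -
      have b1: "bounded_linear (\<lambda>y. R (inv T y))"
        using bounded_linear_compose[of R "inv T"] Tinv RA unfolding cbounded_linear_def R_def o_def by blast
      have b2: "bounded_linear (\<lambda>y. T (R (inv T y)))"
        using bounded_linear_compose[OF Tbl b1] .
      have "\<forall>c x. T (R (inv T (scaleC c x))) = scaleC c (T (R (inv T x)))"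
        using Tinv RA TC unfolding cbounded_linear_def R_def by simp
      thus ?thesis using b2 unfolding cbounded_linear_def by blast
    qed
    hence "cbounded_linear (the_inv_into DB Bl)" using eq by simp
    hence "l \<in> resolvent_set DB B"
      unfolding resolvent_set_def mem_Collect_eq
      using injB True by (simp only: Bl_def)
    thus ?thesis by blast
  qed
qed

end
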